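(* Let $G$ be an edge-coloured multigraph, $t \ge 5$, $M$ a rainbow matching of maximum size in $G$, $C_0$ the set of colours not used on $M$, and $N$ a $t$-auxiliary matching for $M$. Then (i) there is no $(C_0 \cup C_N)$-coloured edge vertex-disjoint from the matching $N \cup (M\setminus M_N)$, and (ii) there is no $(C_0\cup C_N)$-rainbow horn in the matching $N \cup (M \setminus M_N)$.
   Context: A rainbow matching is a matching whose edges have pairwise distinct colours; an edge is $C$-coloured if its colour lies in $C$. Let $V$ be the vertex set of $G$. For a rainbow matching $M$ with unused colour set $C_0$, a $t$-auxiliary matching for $M$ is a matching $N$ each of whose edges has one endpoint in $V\setminus V(M)$ and the other in $V(M)$, such that for each edge of $N$ its pair of endpoints is joined by edges of at least $t$ distinct colours from $C_0$, and no two edges of $N$ intersect the same edge of $M$. $M_N \subseteq M$ is the set of edges of $M$ intersecting an edge of $N$, and $C_N$ is the set of colours of the edges of $M_N$. For a matching $L$, a $C$-rainbow horn in $L$ is an edge $e\in L$ such that there exist two vertex-disjoint edges $e_1,e_2$, each with one endpoint in $e$ and the other in $V\setminus V(L)$, of two distinct colours $c_1,c_2\in C$. *)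

theory Defs
  imports Main
begin

text \<open>An edge-coloured multigraph: vertex set V, edge set E (edges are abstract objects,
so parallel edges are allowed), endpoint map ends and colouring col.\<close>

definition multigraph :: "'v set \<Rightarrow> 'e set \<Rightarrow> ('e \<Rightarrow> 'v set) \<Rightarrow> bool" where
  "multigraph V E ends \<longleftrightarrow> finite V \<and> finite E \<and>
     (\<forall>e\<in>E. ends e \<subseteq> V \<and> card (ends e) = 2)"

definition matching :: "'e set \<Rightarrow> ('e \<Rightarrow> 'v set) \<Rightarrow> 'e set \<Rightarrow> bool" where
  "matching E ends M \<longleftrightarrow> M \<subseteq> E \<and>
     (\<forall>e\<in>M. \<forall>f\<in>M. e \<noteq> f \<longrightarrow> ends e \<inter> ends f = {})"

definition rainbow_matching ::
  "'e set \<Rightarrow> ('e \<Rightarrow> 'v set) \<Rightarrow> ('e \<Rightarrow> 'c) \<Rightarrow> 'e set \<Rightarrow> bool" where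
  "rainbow_matching E ends col M \<longleftrightarrow> matching E ends M \<and> inj_on col M"

definition max_rainbow_matching ::
  "'e set \<Rightarrow> ('e \<Rightarrow> 'v set) \<Rightarrow> ('e \<Rightarrow> 'c) \<Rightarrow> 'e set \<Rightarrow> bool" where
  "max_rainbow_matching E ends col M \<longleftrightarrow> rainbow_matching E ends col M \<and>
     (\<forall>M'. rainbow_matching E ends col M' \<longrightarrow> card M' \<le> card M)"

definition unused_colours :: "('e \<Rightarrow> 'c) \<Rightarrow> 'e set \<Rightarrow> 'c set" where
  "unused_colours col M = - (col ` M)"

definition VM :: "('e \<Rightarrow> 'v set) \<Rightarrow> 'e set \<Rightarrow> 'v set" where
  "VM ends M = \<Union> (ends ` M)"

text \<open>A t-auxiliary matching N for M: a set of vertex pairs (not necessarily edges of G).\<close>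
definition aux_matching ::
  "nat \<Rightarrow> 'v set \<Rightarrow> 'e set \<Rightarrow> ('e \<Rightarrow> 'v set) \<Rightarrow> ('e \<Rightarrow> 'c) \<Rightarrow> 'e set \<Rightarrow> 'v set set \<Rightarrow> bool" where
  "aux_matching t V E ends col M N \<longleftrightarrow>
     (\<forall>x\<in>N. \<exists>u v. x = {u, v} \<and> u \<in> V - VM ends M \<and> v \<in> VM ends M) \<and>
     (\<forall>x\<in>N. \<forall>y\<in>N. x \<noteq> y \<longrightarrow> x \<inter> y = {}) \<and>
     (\<forall>x\<in>N. t \<le> card {c \<in> unused_colours col M. \<exists>e\<in>E. ends e = x \<and> col e = c}) \<and>
     (\<forall>x\<in>N. \<forall>y\<in>N. x \<noteq> y \<longrightarrow>
        \<not> (\<exists>e\<in>M. x \<inter> ends e \<noteq> {} \<and> y \<inter> ends e \<noteq> {}))"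

definition M_N :: "('e \<Rightarrow> 'v set) \<Rightarrow> 'e set \<Rightarrow> 'v set set \<Rightarrow> 'e set" where
  "M_N ends M N = {e \<in> M. \<exists>x\<in>N. ends e \<inter> x \<noteq> {}}"

definition C_N :: "('e \<Rightarrow> 'v set) \<Rightarrow> ('e \<Rightarrow> 'c) \<Rightarrow> 'e set \<Rightarrow> 'v set set \<Rightarrow> 'c set" where
  "C_N ends col M N = col ` M_N ends M N"

definition rainbow_horn ::
  "'e set \<Rightarrow> ('e \<Rightarrow> 'v set) \<Rightarrow> ('e \<Rightarrow> 'c) \<Rightarrow> 'c set \<Rightarrow> 'v set set \<Rightarrow> 'v set \<Rightarrow> bool" where
  "rainbow_horn E ends col C L x \<longleftrightarrow> x \<in> L \<and>
     (\<exists>e1\<in>E. \<exists>e2\<in>E. ends e1 \<inter> ends e2 = {} \<and>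
        col e1 \<in> C \<and> col e2 \<in> C \<and> col e1 \<noteq> col e2 \<and>
        ends e1 \<inter> x \<noteq> {} \<and> ends e1 - \<Union>L \<noteq> {} \<and>
        ends e2 \<inter> x \<noteq> {} \<and> ends e2 - \<Union>L \<noteq> {})"

end

theory Submission
  imports Defs
begin



lemma N_shape:
  assumes "aux_matching t V E ends col M N" "y \<in> N"
  obtains u v where "y = {u,v}" "u \<in> V" "u \<notin> VM ends M" "v \<in> VM ends M"
proof -
  have "\<forall>x\<in>N. \<exists>u v. x = {u, v} \<and> u \<in> V - VM ends M \<and> v \<in> VM ends M"
    using assms(1) unfolding aux_matching_def by (rule conjunct1)
  then obtain u v where "y = {u, v} \<and> u \<in> V - VM ends M \<and> v \<in> VM ends M" using assms(2) by blast
  thus ?thesis using that by blast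
qed

lemma N_disj:
  assumes "aux_matching t V E ends col M N" "x \<in> N" "y \<in> N" "x \<noteq> y"
  shows "x \<inter> y = {}"
proof -
  have "\<forall>x\<in>N. \<forall>y\<in>N. x \<noteq> y \<longrightarrow> x \<inter> y = {}" using assms(1) unfolding aux_matching_def by simp
  thus ?thesis using assms by blast
qed

lemma N_same:
  assumes "aux_matching t V E ends col M N" "x \<in> N" "y \<in> N" "r \<in> M"
    "x \<inter> ends r \<noteq> {}" "y \<inter> ends r \<noteq> {}"
  shows "x = y"
proof -
  have "\<forall>x\<in>N. \<forall>y\<in>N. x \<noteq> y \<longrightarrow>
        \<not> (\<exists>e\<in>M. x \<inter> ends e \<noteq> {} \<and> y \<inter> ends e \<noteq> {})" using assms(1) unfolding aux_matching_def by simp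
  thus ?thesis using assms by blast
qed

lemma N_count:
  assumes "aux_matching t V E ends col M N" "x \<in> N"
  shows "t \<le> card {c \<in> unused_colours col M. \<exists>e\<in>E. ends e = x \<and> col e = c}"
proof -
  have "\<forall>x\<in>N. t \<le> card {c \<in> unused_colours col M. \<exists>e\<in>E. ends e = x \<and> col e = c}" using assms(1) unfolding aux_matching_def by simp
  thus ?thesis using assms by blast
qed

lemma matching_unique:
  assumes "matching E ends M" "r \<in> M" "r' \<in> M" "z \<in> ends r" "z \<in> ends r'"
  shows "r = r'"
  using assms unfolding matching_def by blast

lemma N_touch_unique:
  assumes "aux_matching t V E ends col M N" "matching E ends M" "y \<in> N"
    "r \<in> M" "r' \<in> M" "y \<inter> ends r \<noteq> {}" "y \<inter> ends r' \<noteq> {}"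
  shows "r = r'"
proof -
  obtain u v where y: "y = {u,v}" "u \<notin> VM ends M" "v \<in> VM ends M"
    using N_shape[OF assms(1,3)] by metis
  have "u \<notin> ends r" "u \<notin> ends r'" using y assms(4,5) unfolding VM_def by auto
  hence "v \<in> ends r" "v \<in> ends r'" using assms(6,7) y by auto
  thus ?thesis using matching_unique[OF assms(2,4,5)] by blast
qed
lemma swap:
  assumes mg: "multigraph V E ends" and rm: "rainbow_matching E ends col M"
    and aux: "aux_matching t V E ends col M N" and fR: "finite R"
  shows "R \<subseteq> M_N ends M N \<Longrightarrow> K \<subseteq> M \<Longrightarrow> K \<inter> R = {} \<Longrightarrow> P \<subseteq> E \<Longrightarrow> P \<inter> M = {}
    \<Longrightarrow> rainbow_matching E ends col (K \<union> P)
    \<Longrightarrow> (\<forall>r\<in>R. \<forall>y\<in>N. y \<inter> ends r \<noteq> {} \<longrightarrow> (\<forall>p\<in>P. ends p \<inter> y = {}))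
    \<Longrightarrow> card R + card (col ` P \<inter> unused_colours col M) \<le> t
    \<Longrightarrow> \<exists>M'. rainbow_matching E ends col M' \<and> card M' = card K + card P + card R"
  using fR
proof (induction R arbitrary: P rule: finite_induct)
  case empty
  have fE: "finite E" using mg unfolding multigraph_def by auto
  have "M \<subseteq> E" using rm unfolding rainbow_matching_def matching_def by auto
  hence "finite K" "finite P" using empty fE by (auto intro: finite_subset)
  moreover have "K \<inter> P = {}" using empty by auto
  ultimately show ?case using empty by (intro exI[of _ "K \<union> P"]) (simp add: card_Un_disjoint)
next
  case (insert r R')
  let ?C0 = "unused_colours col M"
  have fE: "finite E" using mg unfolding multigraph_def by auto
  have mM: "matching E ends M" and MsE: "M \<subseteq> E" using rm unfolding rainbow_matching_def matching_def by auto
  have fP: "finite P" using insert fE by (auto intro: finite_subset)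
  have rMN: "r \<in> M_N ends M N" using insert by auto
  then obtain y where y: "y \<in> N" "ends r \<inter> y \<noteq> {}" and rM: "r \<in> M" unfolding M_N_def by auto
  obtain u v where uv: "y = {u,v}" "u \<notin> VM ends M" "v \<in> VM ends M"
    using N_shape[OF aux y(1)] by metis
  define S where "S = {c \<in> ?C0. \<exists>e\<in>E. ends e = y \<and> col e = c}"
  have tS: "t \<le> card S" using N_count[OF aux y(1)] unfolding S_def .
  define F where "F = col ` P \<inter> ?C0"
  have fF: "finite F" using fP unfolding F_def by auto
  have cF: "card F < t" using insert.prems(8) insert(1,2) unfolding F_def by simp
  have "\<not> S \<subseteq> F"
  proof
    assume "S \<subseteq> F" hence "card S \<le> card F" using fF card_mono by blast
    thus False using cF tS by simp
  qed
  then obtain c where c: "c \<in> S" "c \<notin> F" by blast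
  then obtain g where g: "g \<in> E" "ends g = y" "col g = c" "c \<in> ?C0" unfolding S_def by blast
  have gM: "g \<notin> M" using g(2) uv unfolding VM_def by auto
  have Pdisj: "\<forall>p\<in>P. ends p \<inter> y = {}" using insert.prems(7) y by blast
  have gP: "g \<notin> P" using Pdisj g(2) uv by auto
  have Kdisj: "\<forall>k\<in>K. ends k \<inter> y = {}"
  proof
    fix k assume k: "k \<in> K"
    show "ends k \<inter> y = {}"
    proof (rule ccontr)
      assume "ends k \<inter> y \<noteq> {}"
      hence "k = r" using N_touch_unique[OF aux mM y(1) _ rM] insert.prems(2) k y(2) by blast
      thus False using k insert.prems(3) by auto
    qed
  qed
  have colg: "col g \<notin> col ` (K \<union> P)"
    using g c(2) insert.prems(2) unfolding F_def unused_colours_def by auto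
  have rm': "rainbow_matching E ends col (K \<union> insert g P)"
  proof -
    have "matching E ends (K \<union> P)" "inj_on col (K \<union> P)" using insert.prems(6) unfolding rainbow_matching_def by auto
    moreover have "K \<union> insert g P = insert g (K \<union> P)" by auto
    ultimately show ?thesis using g Kdisj Pdisj colg gM gP unfolding rainbow_matching_def matching_def
      by (auto simp: inj_on_insert)
  qed
  have inv': "\<forall>r'\<in>R'. \<forall>y'\<in>N. y' \<inter> ends r' \<noteq> {} \<longrightarrow> (\<forall>p\<in>insert g P. ends p \<inter> y' = {})"
  proof (intro ballI impI)
    fix r' y' p assume r': "r' \<in> R'" "y' \<in> N" "y' \<inter> ends r' \<noteq> {}" and p: "p \<in> insert g P"
    show "ends p \<inter> y' = {}"
    proof (cases "p = g")
      case True
      have "y \<noteq> y'"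
      proof
        assume "y = y'"
        hence "r = r'" using N_touch_unique[OF aux mM y(1) rM, of r'] y(2) r' insert.prems(1) unfolding M_N_def by blast
        thus False using r' insert(2) by auto
      qed
      thus ?thesis using N_disj[OF aux y(1) r'(2)] True g(2) by simp
    next
      case False thus ?thesis using p r' insert.prems(7) by auto
    qed
  qed
  have "col ` insert g P \<inter> ?C0 = insert c F" using g unfolding F_def by auto
  hence cb: "card R' + card (col ` insert g P \<inter> ?C0) \<le> t"
    using insert.prems(8) insert(1,2) fF unfolding F_def by (simp add: card_insert_if)
  obtain M' where "rainbow_matching E ends col M'" "card M' = card K + card (insert g P) + card R'"
    using insert.IH[of "insert g P"] insert.prems(1-5) g(1) gM rm' inv' cb by auto
  thus ?case using fP gP insert(1,2) by (intro exI[of _ M']) simp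
qed

lemma card_at_vertex:
  assumes "matching E ends M" "finite M"
  shows "card {r\<in>M. b \<in> ends r} \<le> 1"
proof -
  have "finite {r\<in>M. b \<in> ends r}" using assms(2) by simp
  moreover have "\<forall>r\<in>{r\<in>M. b \<in> ends r}. \<forall>r'\<in>{r\<in>M. b \<in> ends r}. r = r'"
    using matching_unique[OF assms(1)] by blast
  ultimately show ?thesis by (subst One_nat_def, subst card_le_Suc0_iff_eq) auto
qed

lemma bound:
  assumes "rainbow_matching E ends col M" "finite M"
    "R \<subseteq> {r\<in>M. b1 \<in> ends r \<or> b2 \<in> ends r \<or> col r = c1 \<or> col r = c2}"
    "F \<subseteq> {c1,c2} \<inter> unused_colours col M"
  shows "card R + card F \<le> 4"
proof -
  have mM: "matching E ends M" and inj: "inj_on col M" using assms(1) unfolding rainbow_matching_def by auto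
  define A1 where "A1 = {r\<in>M. b1 \<in> ends r}"
  define A2 where "A2 = {r\<in>M. b2 \<in> ends r}"
  define R2 where "R2 = {r\<in>M. col r \<in> {c1,c2}}"
  have fin: "finite A1" "finite A2" "finite R2" using assms(2) unfolding A1_def A2_def R2_def by auto
  have "R \<subseteq> A1 \<union> A2 \<union> R2" using assms(3) unfolding A1_def A2_def R2_def by auto
  hence "card R \<le> card (A1 \<union> A2 \<union> R2)" using fin by (intro card_mono) auto
  also have "\<dots> \<le> card (A1 \<union> A2) + card R2" by (rule card_Un_le)
  also have "\<dots> \<le> card A1 + card A2 + card R2" using card_Un_le[of A1 A2] by simp
  finally have cR: "card R \<le> card A1 + card A2 + card R2" .
  have "card A1 \<le> 1" "card A2 \<le> 1" unfolding A1_def A2_def using card_at_vertex[OF mM assms(2)] by auto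
  have "card R2 = card (col ` R2)" using inj unfolding R2_def by (intro card_image[symmetric]) (auto intro: inj_on_subset)
  also have "\<dots> \<le> card ({c1,c2} - unused_colours col M)"
    by (intro card_mono) (auto simp: R2_def unused_colours_def)
  finally have "card R2 \<le> card ({c1,c2} - unused_colours col M)" .
  moreover have "card F \<le> card ({c1,c2} \<inter> unused_colours col M)" using assms(4) by (intro card_mono) auto
  moreover have "card ({c1,c2} - unused_colours col M) + card ({c1,c2} \<inter> unused_colours col M) = card {c1,c2}"
    using card_Int_Diff[of "{c1,c2}" "unused_colours col M"] by simp
  moreover have "card {c1,c2} \<le> 2" by (simp add: card_insert_if)
  ultimately show ?thesis using cR \<open>card A1 \<le> 1\<close> \<open>card A2 \<le> 1\<close> by linarith
qed

lemma two_elems: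
  assumes "card S = 2" "a \<in> S" "b \<in> S" "a \<noteq> b"
  shows "S = {a,b}"
proof -
  obtain p q where "S = {p,q}" "p \<noteq> q" using assms(1) card_2_iff by metis
  thus ?thesis using assms(2-4) by blast
qed

lemma rm_insert:
  assumes "rainbow_matching E ends col S" "e \<in> E" "e \<notin> S"
    "\<forall>k\<in>S. ends k \<inter> ends e = {} \<and> col k \<noteq> col e"
  shows "rainbow_matching E ends col (insert e S)"
proof -
  have "matching E ends S" "inj_on col S" using assms(1) unfolding rainbow_matching_def by auto
  moreover have "col e \<notin> col ` S" using assms(4) by auto
  ultimately show ?thesis using assms(2,4) unfolding rainbow_matching_def matching_def
    by (auto simp: inj_on_insert)
qed

lemma rm_subset:
  assumes "rainbow_matching E ends col S" "T \<subseteq> S"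
  shows "rainbow_matching E ends col T"
  using assms unfolding rainbow_matching_def matching_def by (meson inj_on_subset subset_iff)

lemma colfact:
  assumes "rainbow_matching E ends col M" "k \<in> M" "col k \<in> unused_colours col M \<union> C_N ends col M N"
  shows "k \<in> M_N ends M N"
proof -
  have "col k \<notin> unused_colours col M" using assms(2) unfolding unused_colours_def by auto
  then obtain r0 where r0: "r0 \<in> M_N ends M N" "col r0 = col k" using assms(3) unfolding C_N_def by auto
  have "r0 \<in> M" using r0 unfolding M_N_def by auto
  hence "r0 = k" using assms(1,2) r0(2) unfolding rainbow_matching_def inj_on_def by auto
  thus ?thesis using r0 by simp
qed

lemma finish:
  assumes "max_rainbow_matching E ends col M" "rainbow_matching E ends col M'" "card M' = card M + 1"
  shows False
  using assms unfolding max_rainbow_matching_def by force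


lemma core:
  assumes mg: "multigraph V E ends" and mx: "max_rainbow_matching E ends col M"
    and aux: "aux_matching t V E ends col M N" and t5: "t \<ge> 5"
    and L: "L = N \<union> ends ` (M - M_N ends M N)"
    and C: "C = unused_colours col M \<union> C_N ends col M N"
    and f: "f \<in> M"
    and H1: "\<forall>z\<in>x. \<forall>k\<in>M. z \<in> ends k \<longrightarrow> k = f"
    and H2: "\<forall>y\<in>N. \<forall>r\<in>M. y \<inter> x \<noteq> {} \<longrightarrow> y \<inter> ends r \<noteq> {} \<longrightarrow> r = f"
    and e: "e1 \<in> E" "e2 \<in> E" "ends e1 \<inter> ends e2 = {}" "col e1 \<in> C" "col e2 \<in> C" "col e1 \<noteq> col e2"
    and en: "ends e1 = {a1,b1}" "ends e2 = {a2,b2}" "a1 \<in> x" "a2 \<in> x" "b1 \<notin> \<Union>L" "b2 \<notin> \<Union>L"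
    and e2M: "e2 \<notin> M" and e1M: "e1 \<notin> M \<or> e1 = f"
  shows False
proof -
  have rm: "rainbow_matching E ends col M" using mx unfolding max_rainbow_matching_def by auto
  have fE: "finite E" using mg unfolding multigraph_def by auto
  have MsE: "M \<subseteq> E" using rm unfolding rainbow_matching_def matching_def by auto
  have fM: "finite M" using fE MsE finite_subset by blast
  define R where "R = {r \<in> M_N ends M N. r \<noteq> f \<and> (b1 \<in> ends r \<or> b2 \<in> ends r \<or> col r = col e1 \<or> col r = col e2)}"
  have RMN: "R \<subseteq> M_N ends M N" unfolding R_def by auto
  have RM: "R \<subseteq> M" using RMN unfolding M_N_def by auto
  have fR: "finite R" using RM fM finite_subset by blast
  have fnR: "f \<notin> R" unfolding R_def by auto
  have G: "ends k \<inter> ends e = {} \<and> col k \<noteq> col e"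
    if "ends e = {a,b}" "a \<in> x" "b \<in> {b1,b2}" "b \<notin> \<Union>L" "col e \<in> C" "col e \<in> {col e1, col e2}"
       "k \<in> M - insert f R" for k e a b
  proof
    have k: "k \<in> M" "k \<noteq> f" "k \<notin> R" using that(7) by auto
    have "a \<notin> ends k" using H1 that(2) k by blast
    moreover have "b \<notin> ends k"
    proof
      assume b: "b \<in> ends k"
      have "k \<in> M_N ends M N"
      proof (rule ccontr)
        assume "k \<notin> M_N ends M N"
        hence "ends k \<in> L" using k L by auto
        thus False using b that(4) by auto
      qed
      thus False using k b that(3) unfolding R_def by auto
    qed
    ultimately show "ends k \<inter> ends e = {}" using that(1) by auto
    show "col k \<noteq> col e"
    proof
      assume ce: "col k = col e"
      hence "k \<in> M_N ends M N" using colfact[OF rm k(1)] that(5) C by auto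
      thus False using k ce that(6) unfolding R_def by auto
    qed
  qed
  have I: "ends e \<inter> y = {}"
    if "ends e = {a,b}" "a \<in> x" "b \<notin> \<Union>L" "r \<in> R" "y \<in> N" "y \<inter> ends r \<noteq> {}" for e a b r y
  proof -
    have "b \<notin> y" using that(3,5) L by auto
    moreover have "a \<notin> y"
    proof
      assume "a \<in> y"
      hence "r = f" using H2 that(2,4,5,6) RM by blast
      thus False using that(4) fnR by simp
    qed
    ultimately show ?thesis using that(1) by auto
  qed
  have Fb: "card R + card (col ` P \<inter> unused_colours col M) \<le> t" if "P \<subseteq> {e1,e2}" for P
  proof -
    have "card R + card (col ` P \<inter> unused_colours col M) \<le> 4"
      by (rule bound[OF rm fM, of R b1 b2 "col e1" "col e2"]) (use RM that in \<open>auto simp: R_def\<close>)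
    thus ?thesis using t5 by simp
  qed
  show False
  proof (cases "e1 \<notin> M")
    case True
    define K where "K = M - insert f R"
    have KM: "K \<subseteq> M" "K \<inter> R = {}" unfolding K_def by auto
    have rK: "rainbow_matching E ends col K" using rm_subset[OF rm KM(1)] .
    have "\<forall>k\<in>K. ends k \<inter> ends e1 = {} \<and> col k \<noteq> col e1"
      using G[OF en(1,3) _ en(5)] e(4) unfolding K_def by auto
    hence r1: "rainbow_matching E ends col (insert e1 K)" using rm_insert[OF rK e(1)] True KM by auto
    have "\<forall>k\<in>K. ends k \<inter> ends e2 = {} \<and> col k \<noteq> col e2"
      using G[OF en(2,4) _ en(6)] e(5) unfolding K_def by auto
    moreover have "e1 \<noteq> e2" using e(3) en(1) by auto
    ultimately have r2: "rainbow_matching E ends col (insert e2 (insert e1 K))"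
      using rm_insert[OF r1 e(2)] e2M KM e(3,6) by (auto simp: Int_commute)
    have "K \<union> {e1,e2} = insert e2 (insert e1 K)" by auto
    hence r3: "rainbow_matching E ends col (K \<union> {e1,e2})" using r2 by simp
    obtain M' where M': "rainbow_matching E ends col M'" "card M' = card K + card {e1,e2} + card R"
      using swap[OF mg rm aux fR RMN KM(1,2), of "{e1,e2}"] e(1,2) True e2M r3 Fb[of "{e1,e2}"]
        I[OF en(1,3,5)] I[OF en(2,4,6)] by auto
    have "card K = card M - card (insert f R)" unfolding K_def using fM RM f by (intro card_Diff_subset) (auto intro: finite_subset)
    moreover have "card (insert f R) = card R + 1" using fR fnR by simp
    moreover have "card (insert f R) \<le> card M" using fM RM f by (intro card_mono) auto
    moreover have "card {e1,e2} = 2" using \<open>e1 \<noteq> e2\<close> by simp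
    ultimately have "card M' = card M + 1" using M'(2) by linarith
    thus False using finish[OF mx M'(1)] by simp
  next
    case False
    hence e1f: "e1 = f" using e1M by simp
    define K where "K = M - R"
    have KM: "K \<subseteq> M" "K \<inter> R = {}" unfolding K_def by auto
    have rK: "rainbow_matching E ends col K" using rm_subset[OF rm KM(1)] .
    have "\<forall>k\<in>K. ends k \<inter> ends e2 = {} \<and> col k \<noteq> col e2"
    proof
      fix k assume k: "k \<in> K"
      show "ends k \<inter> ends e2 = {} \<and> col k \<noteq> col e2"
      proof (cases "k = f")
        case True thus ?thesis using e1f e(3,6) by simp
      next
        case False thus ?thesis using G[OF en(2,4) _ en(6), of k] e(5) k unfolding K_def by auto
      qed
    qed
    hence r1: "rainbow_matching E ends col (K \<union> {e2})" using rm_insert[OF rK e(2)] e2M KM by auto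
    obtain M' where M': "rainbow_matching E ends col M'" "card M' = card K + card {e2} + card R"
      using swap[OF mg rm aux fR RMN KM(1,2), of "{e2}"] e(2) e2M r1 Fb[of "{e2}"]
        I[OF en(2,4,6)] by auto
    have "card K = card M - card R" unfolding K_def using fM RM by (intro card_Diff_subset) (auto intro: finite_subset)
    moreover have "card R \<le> card M" using fM RM by (intro card_mono) auto
    ultimately have "card M' = card M + 1" using M'(2) by simp
    thus False using finish[OF mx M'(1)] by simp
  qed
qed


theorem lemma2p6:
  fixes V :: "'v set" and E :: "'e set" and ends :: "'e \<Rightarrow> 'v set" and col :: "'e \<Rightarrow> 'c"
    and t :: nat and M :: "'e set" and N :: "'v set set"
  assumes "multigraph V E ends"
    and "t \<ge> 5"
    and "max_rainbow_matching E ends col M"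
    and "aux_matching t V E ends col M N"
  shows "\<not> (\<exists>e\<in>E. col e \<in> unused_colours col M \<union> C_N ends col M N \<and>
              ends e \<inter> \<Union> (N \<union> ends ` (M - M_N ends M N)) = {}) \<and>
         \<not> (\<exists>x. rainbow_horn E ends col (unused_colours col M \<union> C_N ends col M N)
                 (N \<union> ends ` (M - M_N ends M N)) x)"
proof -
  note mg = assms(1) and t5 = assms(2) and mx = assms(3) and aux = assms(4)
  define L where "L = N \<union> ends ` (M - M_N ends M N)"
  define C where "C = unused_colours col M \<union> C_N ends col M N"
  have rm: "rainbow_matching E ends col M" using mx unfolding max_rainbow_matching_def by auto
  have mM: "matching E ends M" using rm unfolding rainbow_matching_def by auto
  have fE: "finite E" using mg unfolding multigraph_def by auto
  have MsE: "M \<subseteq> E" using rm unfolding rainbow_matching_def matching_def by auto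
  have fM: "finite M" using fE MsE finite_subset by blast
  have c2: "card (ends e) = 2" if "e \<in> E" for e using mg that unfolding multigraph_def by auto
  have ne: "ends e \<noteq> {}" if "e \<in> E" for e using c2[OF that] by auto
  have part1: "\<not> (\<exists>e\<in>E. col e \<in> C \<and> ends e \<inter> \<Union>L = {})"
  proof
    assume "\<exists>e\<in>E. col e \<in> C \<and> ends e \<inter> \<Union>L = {}"
    then obtain e where e: "e \<in> E" "col e \<in> C" "ends e \<inter> \<Union>L = {}" by blast
    obtain p q where pq: "ends e = {p,q}" using c2[OF e(1)] card_2_iff by metis
    define R where "R = {r \<in> M_N ends M N. ends r \<inter> ends e \<noteq> {} \<or> col r = col e}"
    have RMN: "R \<subseteq> M_N ends M N" unfolding R_def by auto
    have RM: "R \<subseteq> M" using RMN unfolding M_N_def by auto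
    have fR: "finite R" using RM fM finite_subset by blast
    define K where "K = M - R"
    have KM: "K \<subseteq> M" "K \<inter> R = {}" unfolding K_def by auto
    have rK: "rainbow_matching E ends col K" using rm_subset[OF rm KM(1)] .
    have eM: "e \<notin> M"
    proof
      assume eM: "e \<in> M"
      show False
      proof (cases "e \<in> M_N ends M N")
        case True
        then obtain y where "y \<in> N" "ends e \<inter> y \<noteq> {}" unfolding M_N_def by auto
        thus False using e(3) unfolding L_def by auto
      next
        case False
        hence "ends e \<in> L" using eM unfolding L_def by auto
        thus False using e(3) ne[OF e(1)] by auto
      qed
    qed
    have "\<forall>k\<in>K. ends k \<inter> ends e = {} \<and> col k \<noteq> col e"
    proof
      fix k assume k: "k \<in> K"
      hence kM: "k \<in> M" "k \<notin> R" unfolding K_def by auto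
      show "ends k \<inter> ends e = {} \<and> col k \<noteq> col e"
      proof
        show "ends k \<inter> ends e = {}"
        proof (cases "k \<in> M_N ends M N")
          case True thus ?thesis using kM unfolding R_def by auto
        next
          case False
          hence "ends k \<in> L" using kM unfolding L_def by auto
          thus ?thesis using e(3) by auto
        qed
        show "col k \<noteq> col e"
        proof
          assume ce: "col k = col e"
          hence "k \<in> M_N ends M N" using colfact[OF rm kM(1)] e(2) unfolding C_def by auto
          thus False using kM ce unfolding R_def by auto
        qed
      qed
    qed
    hence r1: "rainbow_matching E ends col (K \<union> {e})" using rm_insert[OF rK e(1)] eM KM by auto
    have inv: "\<forall>r\<in>R. \<forall>y\<in>N. y \<inter> ends r \<noteq> {} \<longrightarrow> (\<forall>p\<in>{e}. ends p \<inter> y = {})"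
      using e(3) unfolding L_def by auto
    have "card R + card (col ` {e} \<inter> unused_colours col M) \<le> 4"
      by (rule bound[OF rm fM, of R p q "col e" "col e"]) (use RM pq in \<open>auto simp: R_def\<close>)
    hence cb: "card R + card (col ` {e} \<inter> unused_colours col M) \<le> t" using t5 by simp
    obtain M' where M': "rainbow_matching E ends col M'" "card M' = card K + card {e} + card R"
      using swap[OF mg rm aux fR RMN KM(1,2), of "{e}"] e(1) eM r1 inv cb by auto
    have "card K = card M - card R" unfolding K_def using fM RM by (intro card_Diff_subset) (auto intro: finite_subset)
    moreover have "card R \<le> card M" using fM RM by (intro card_mono) auto
    ultimately have "card M' = card M + 1" using M'(2) by simp
    thus False using finish[OF mx M'(1)] by simp
  qed
  have part2: "\<not> (\<exists>x. rainbow_horn E ends col C L x)"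
  proof
    assume "\<exists>x. rainbow_horn E ends col C L x"
    then obtain x e1 e2 where x: "x \<in> L" and e: "e1 \<in> E" "e2 \<in> E" "ends e1 \<inter> ends e2 = {}"
      "col e1 \<in> C" "col e2 \<in> C" "col e1 \<noteq> col e2"
      and h: "ends e1 \<inter> x \<noteq> {}" "ends e1 - \<Union>L \<noteq> {}" "ends e2 \<inter> x \<noteq> {}" "ends e2 - \<Union>L \<noteq> {}"
      unfolding rainbow_horn_def by blast
    obtain a1 b1 where ab1: "a1 \<in> ends e1" "a1 \<in> x" "b1 \<in> ends e1" "b1 \<notin> \<Union>L" using h(1,2) by blast
    obtain a2 b2 where ab2: "a2 \<in> ends e2" "a2 \<in> x" "b2 \<in> ends e2" "b2 \<notin> \<Union>L" using h(3,4) by blast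
    have "a1 \<noteq> b1" "a2 \<noteq> b2" using ab1 ab2 x by auto
    hence en: "ends e1 = {a1,b1}" "ends e2 = {a2,b2}" using two_elems c2 e(1,2) ab1 ab2 by metis+
    have e12: "e1 \<noteq> e2" using e(3) ne[OF e(1)] by auto
    show False
    proof (cases "x \<in> N")
      case True
      obtain u v where uv: "x = {u,v}" "u \<notin> VM ends M" "v \<in> VM ends M"
        using N_shape[OF aux True] by metis
      then obtain f where f: "f \<in> M" "v \<in> ends f" unfolding VM_def by auto
      have H1: "\<forall>z\<in>x. \<forall>k\<in>M. z \<in> ends k \<longrightarrow> k = f"
      proof (intro ballI impI)
        fix z k assume z: "z \<in> x" "k \<in> M" "z \<in> ends k"
        have "z \<noteq> u" using z(2,3) uv(2) unfolding VM_def by auto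
        hence "z = v" using z(1) uv(1) by auto
        thus "k = f" using matching_unique[OF mM z(2) f(1)] z(3) f(2) by simp
      qed
      have H2: "\<forall>y\<in>N. \<forall>r\<in>M. y \<inter> x \<noteq> {} \<longrightarrow> y \<inter> ends r \<noteq> {} \<longrightarrow> r = f"
      proof (intro ballI impI)
        fix y r assume y: "y \<in> N" "r \<in> M" "y \<inter> x \<noteq> {}" "y \<inter> ends r \<noteq> {}"
        hence "y = x" using N_disj[OF aux y(1) True] by blast
        thus "r = f" using N_touch_unique[OF aux mM True y(2) f(1)] y(4) f(2) uv(1) by blast
      qed
      have em1: "e1 \<notin> M \<or> e1 = f" using H1 ab1 by blast
      have em2: "e2 \<notin> M \<or> e2 = f" using H1 ab2 by blast
      show False
      proof (cases "e2 \<in> M")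
        case False
        show False by (rule core[OF mg mx aux t5 L_def C_def f(1) H1 H2 e en ab1(2) ab2(2) ab1(4) ab2(4) False em1])
      next
        case True
        hence "e2 = f" using em2 by simp
        hence "e1 \<notin> M" using em1 e12 by auto
        moreover have "ends e2 \<inter> ends e1 = {}" using e(3) by auto
        ultimately show False
          using core[OF mg mx aux t5 L_def C_def f(1) H1 H2 e(2,1) _ e(5,4) _ en(2,1) ab2(2) ab1(2) ab2(4) ab1(4)] e(6) \<open>e2 = f\<close>
          by auto
      qed
    next
      case False
      then obtain f where f: "f \<in> M" "f \<notin> M_N ends M N" "x = ends f" using x unfolding L_def by auto
      have H1: "\<forall>z\<in>x. \<forall>k\<in>M. z \<in> ends k \<longrightarrow> k = f"
        using matching_unique[OF mM _ f(1)] f(3) by blast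
      have H2: "\<forall>y\<in>N. \<forall>r\<in>M. y \<inter> x \<noteq> {} \<longrightarrow> y \<inter> ends r \<noteq> {} \<longrightarrow> r = f"
        using f unfolding M_N_def by blast
      have nM: "e \<notin> M" if "a \<in> ends e" "a \<in> x" "b \<in> ends e" "b \<notin> \<Union>L" for e a b
      proof
        assume "e \<in> M"
        hence "e = f" using H1 that(1,2) by blast
        thus False using that(3,4) f(3) x by auto
      qed
      show False
        by (rule core[OF mg mx aux t5 L_def C_def f(1) H1 H2 e en ab1(2) ab2(2) ab1(4) ab2(4)
              nM[OF ab2]]) (use nM[OF ab1] in blast)
    qed
  qed
  show ?thesis using part1 part2 unfolding L_def C_def by blast
qed
end
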